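(* Let $n$ be a positive even integer and let $A\in\mathbb{M}_n(\mathbb{F}_3)$ be a non-derogatory matrix with $\operatorname{Trace}(A)=0$. Then there exists $M\in\mathbb{M}_n(\mathbb{F}_3)$ with $M^2=0$ such that $A+M$ is diagonalizable over $\mathbb{F}_3$.
   Context: $\mathbb{F}_3$ is the field with three elements. A square matrix is non-derogatory if its minimal polynomial equals its characteristic polynomial. A matrix $X\in\mathbb{M}_n(\mathbb{F}_3)$ is diagonalizable if there is an invertible $U\in\mathbb{M}_n(\mathbb{F}_3)$ with $U^{-1}XU$ diagonal. *)

theory Defs
  imports "Jordan_Normal_Form.Char_Poly"
begin

definition mat_trace :: "'a :: comm_ring_1 mat \<Rightarrow> 'a" where
  "mat_trace A = (\<Sum>i<dim_row A. A $$ (i, i))"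

definition poly_mat_eval :: "nat \<Rightarrow> 'a :: comm_ring_1 poly \<Rightarrow> 'a mat \<Rightarrow> 'a mat" where
  "poly_mat_eval n p A = fold (\<lambda>i B. B + coeff p i \<cdot>\<^sub>m (A ^\<^sub>m i)) [0..<Suc (degree p)] (0\<^sub>m n n)"

definition is_minimal_poly :: "nat \<Rightarrow> 'a :: field mat \<Rightarrow> 'a poly \<Rightarrow> bool" where
  "is_minimal_poly n A p \<longleftrightarrow>
     monic p \<and> poly_mat_eval n p A = 0\<^sub>m n n \<and>
     (\<forall>q. q \<noteq> 0 \<and> poly_mat_eval n q A = 0\<^sub>m n n \<longrightarrow> degree p \<le> degree q)"

definition non_derogatory :: "nat \<Rightarrow> 'a :: field mat \<Rightarrow> bool" where
  "non_derogatory n A \<longleftrightarrow> is_minimal_poly n A (char_poly A)"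

definition diagonalizable :: "nat \<Rightarrow> 'a :: field mat \<Rightarrow> bool" where
  "diagonalizable n X \<longleftrightarrow>
     (\<exists>U V. U \<in> carrier_mat n n \<and> V \<in> carrier_mat n n \<and>
            U * V = 1\<^sub>m n \<and> V * U = 1\<^sub>m n \<and> diagonal_mat (V * X * U))"

end

theory Submission
  imports Defs
begin

definition FF :: "nat \<Rightarrow> 'a::comm_ring_1 mat \<Rightarrow> nat \<Rightarrow> 'a poly \<Rightarrow> 'a mat" where
  "FF n A m p = fold (\<lambda>i B. B + coeff p i \<cdot>\<^sub>m (A ^\<^sub>m i)) [0..<m] (0\<^sub>m n n)"

lemma FF_0[simp]: "FF n A 0 p = 0\<^sub>m n n" by (simp add: FF_def)
lemma FF_Suc: "FF n A (Suc m) p = FF n A m p + coeff p m \<cdot>\<^sub>m (A ^\<^sub>m m)"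
  by (simp add: FF_def)

lemma FF_carrier[simp]: "A \<in> carrier_mat n n \<Longrightarrow> FF n A m p \<in> carrier_mat n n"
  by (induct m) (auto simp: FF_Suc)

lemma FF_ext: assumes A: "A \<in> carrier_mat n n" and "m > degree p"
  shows "FF n A (m + j) p = FF n A m p"
proof (induct j)
  case (Suc j)
  have "coeff p (m + j) = 0" using assms(2) by (simp add: coeff_eq_0)
  moreover have "0 \<cdot>\<^sub>m (A ^\<^sub>m (m + j)) = 0\<^sub>m n n" using A by (intro eq_matI) auto
  ultimately show ?case using Suc A by (simp add: FF_Suc)
qed simp

lemma pme_FF: assumes A: "A \<in> carrier_mat n n" and "m > degree p"
  shows "poly_mat_eval n p A = FF n A m p"
proof -
  have "poly_mat_eval n p A = FF n A (Suc (degree p)) p" by (simp add: poly_mat_eval_def FF_def)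
  also have "\<dots> = FF n A (Suc (degree p) + (m - Suc (degree p))) p" using A by (subst FF_ext) auto
  also have "\<dots> = FF n A m p" using assms by simp
  finally show ?thesis .
qed

lemma pow_mat_Suc_left: assumes A: "(A :: 'a :: semiring_1 mat) \<in> carrier_mat n n"
  shows "A ^\<^sub>m Suc m = A * A ^\<^sub>m m"
proof (induct m)
  case 0 then show ?case using A by simp
next
  case (Suc m)
  have "A ^\<^sub>m Suc (Suc m) = (A * A ^\<^sub>m m) * A" using Suc by simp
  also have "\<dots> = A * (A ^\<^sub>m m * A)" using A by (simp add: assoc_mult_mat[of _ n n _ n _ n])
  finally show ?case by simp
qed

lemma pow_mat_commute: assumes A: "(A :: 'a :: semiring_1 mat) \<in> carrier_mat n n"
  shows "A ^\<^sub>m m * A = A * A ^\<^sub>m m"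
  using pow_mat_Suc_left[OF A, of m] by simp

lemma FF_pCons: assumes A: "A \<in> carrier_mat n n"
  shows "FF n A (Suc m) (pCons a p) = a \<cdot>\<^sub>m 1\<^sub>m n + A * FF n A m p"
proof (induct m)
  case 0
  then show ?case using A by (simp add: FF_Suc)
next
  case (Suc m)
  have "FF n A (Suc (Suc m)) (pCons a p) = (a \<cdot>\<^sub>m 1\<^sub>m n + A * FF n A m p) + coeff p m \<cdot>\<^sub>m (A * A ^\<^sub>m m)"
    using Suc by (simp add: FF_Suc[of _ _ "Suc m"] pow_mat_commute[OF A])
  also have "\<dots> = a \<cdot>\<^sub>m 1\<^sub>m n + (A * FF n A m p + A * (coeff p m \<cdot>\<^sub>m A ^\<^sub>m m))"
    using A by (simp add: mult_smult_distrib[of _ n n _ n], subst assoc_add_mat[of _ n n], auto)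
  also have "\<dots> = a \<cdot>\<^sub>m 1\<^sub>m n + A * FF n A (Suc m) p"
    using A by (simp add: FF_Suc mult_add_distrib_mat[of _ n n _ n])
  finally show ?case .
qed

lemma mat_rearr: fixes X :: "'a :: comm_ring_1 mat" assumes "X \<in> carrier_mat n n" "Y \<in> carrier_mat n n" "P \<in> carrier_mat n n"
  shows "X + Y + (a \<cdot>\<^sub>m P + b \<cdot>\<^sub>m P) = (X + a \<cdot>\<^sub>m P) + (Y + b \<cdot>\<^sub>m P)"
  using assms by (intro eq_matI) (auto simp: algebra_simps)

lemma FF_add: assumes A: "A \<in> carrier_mat n n"
  shows "FF n A m (p + q) = FF n A m p + FF n A m q"
proof (induct m)
  case 0 then show ?case by simp
next
  case (Suc m)
  then show ?case using A
    by (simp add: FF_Suc add_smult_distrib_right_mat[of _ n n] mat_rearr[of _ n])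
qed

lemma FF_smult: assumes A: "A \<in> carrier_mat n n"
  shows "FF n A m (Polynomial.smult c p) = c \<cdot>\<^sub>m FF n A m p"
proof (induct m)
  case 0 then show ?case by (intro eq_matI) auto
next
  case (Suc m)
  have "c * coeff p m \<cdot>\<^sub>m A ^\<^sub>m m = c \<cdot>\<^sub>m (coeff p m \<cdot>\<^sub>m A ^\<^sub>m m)"
    using A by (intro eq_matI) auto
  then show ?case using Suc A
    by (simp add: FF_Suc add_smult_distrib_left_mat[of _ n n])
qed

lemma pme_carrier[simp]: "A \<in> carrier_mat n n \<Longrightarrow> poly_mat_eval n p A \<in> carrier_mat n n"
  using pme_FF[of A n p "Suc (degree p)"] by simp

lemma pme_add: assumes A: "A \<in> carrier_mat n n"
  shows "poly_mat_eval n (p + q) A = poly_mat_eval n p A + poly_mat_eval n q A"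
proof -
  define m where "m = Suc (degree p + degree q)"
  have "degree (p + q) < m" "degree p < m" "degree q < m" unfolding m_def
    using degree_add_le_max[of p q] by auto
  then show ?thesis using A by (simp add: pme_FF[OF A] FF_add)
qed

lemma pme_smult: assumes A: "A \<in> carrier_mat n n"
  shows "poly_mat_eval n (Polynomial.smult c p) A = c \<cdot>\<^sub>m poly_mat_eval n p A"
proof -
  have "degree (Polynomial.smult c p) < Suc (degree p)" "degree p < Suc (degree p)"
    using degree_smult_le[of c p] by auto
  then show ?thesis using A pme_FF[OF A, of p "Suc (degree p)"] pme_FF[OF A, of "Polynomial.smult c p" "Suc (degree p)"]
    by (simp add: FF_smult)
qed

lemma pme_0[simp]: assumes A: "A \<in> carrier_mat n n"
  shows "poly_mat_eval n 0 A = 0\<^sub>m n n"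
  using pme_FF[OF A, of 0 1] A by (simp add: FF_Suc) (intro eq_matI, auto)

lemma pme_pCons: assumes A: "A \<in> carrier_mat n n"
  shows "poly_mat_eval n (pCons a p) A = a \<cdot>\<^sub>m 1\<^sub>m n + A * poly_mat_eval n p A"
proof -
  have "degree (pCons a p) < Suc (Suc (degree p))" by (simp add: degree_pCons_le le_imp_less_Suc)
  then show ?thesis using A pme_FF[OF A, of p "Suc (degree p)"] pme_FF[OF A, of "pCons a p" "Suc (Suc (degree p))"]
    by (simp add: FF_pCons[OF A])
qed

lemma pme_mult: assumes A: "A \<in> carrier_mat n n"
  shows "poly_mat_eval n (p * q) A = poly_mat_eval n p A * poly_mat_eval n q A"
proof (induct p rule: pCons_induct)
  case 0 then show ?case using A by (simp add: left_mult_zero_mat[of _ n n])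
next
  case (pCons a p)
  have "poly_mat_eval n (pCons a p * q) A = poly_mat_eval n (Polynomial.smult a q + pCons 0 (p * q)) A" by simp
  also have "\<dots> = a \<cdot>\<^sub>m poly_mat_eval n q A + (0 \<cdot>\<^sub>m 1\<^sub>m n + A * (poly_mat_eval n p A * poly_mat_eval n q A))"
    using A pCons(2) by (simp add: pme_add pme_smult pme_pCons)
  also have "\<dots> = (a \<cdot>\<^sub>m 1\<^sub>m n + A * poly_mat_eval n p A) * poly_mat_eval n q A"
  proof -
    have z: "0 \<cdot>\<^sub>m 1\<^sub>m n + A * (poly_mat_eval n p A * poly_mat_eval n q A) = A * poly_mat_eval n p A * poly_mat_eval n q A"
    proof -
      have "0 \<cdot>\<^sub>m 1\<^sub>m n = (0\<^sub>m n n :: 'a mat)" by (intro eq_matI) auto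
      moreover have "A * (poly_mat_eval n p A * poly_mat_eval n q A) \<in> carrier_mat n n" using A by (meson mult_carrier_mat pme_carrier)
      ultimately show ?thesis using A by (subst assoc_mult_mat[of _ n n _ n _ n]) auto
    qed
    show ?thesis unfolding z using A
      by (simp add: add_mult_distrib_mat[where nr=n and n=n and nc=n] mult_smult_assoc_mat[where nr=n and n=n and nc=n] left_mult_one_mat[of _ n n])
  qed
  also have "\<dots> = poly_mat_eval n (pCons a p) A * poly_mat_eval n q A" using A by (simp add: pme_pCons)
  finally show ?case .
qed

lemma pme_const: assumes A: "A \<in> carrier_mat n n"
  shows "poly_mat_eval n [:c:] A = c \<cdot>\<^sub>m 1\<^sub>m n"
  using A by (simp add: pme_pCons)

lemma pme_x: assumes A: "A \<in> carrier_mat n n"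
  shows "poly_mat_eval n [:0,1:] A = A"
  using A by (simp add: pme_pCons pme_const) (intro eq_matI, auto)

lemma pme_commute: assumes A: "A \<in> carrier_mat n n"
  shows "poly_mat_eval n p A * poly_mat_eval n q A = poly_mat_eval n q A * poly_mat_eval n p A"
  by (metis A mult.commute pme_mult)

lemma pme_mv: assumes A: "A \<in> carrier_mat n n" and v: "v \<in> carrier_vec n"
  shows "poly_mat_eval n (p * q) A *\<^sub>v v = poly_mat_eval n p A *\<^sub>v (poly_mat_eval n q A *\<^sub>v v)"
  using A v by (simp add: pme_mult assoc_mult_mat_vec[of _ n n _ n])

definition gen :: "nat \<Rightarrow> 'a::field mat \<Rightarrow> 'a vec \<Rightarrow> 'a poly \<Rightarrow> bool" where
  "gen n A u g \<longleftrightarrow> (\<forall>q. poly_mat_eval n q A *\<^sub>v u = 0\<^sub>v n \<longleftrightarrow> g dvd q)"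

context
begin
interpretation field_poly: 
  normalization_euclidean_semiring_multiplicative where zero = "0 :: 'a :: field poly"
    and one = 1 and plus = plus and minus = minus
    and times = times
    and normalize = "\<lambda>p. Polynomial.smult (inverse (lead_coeff p)) p"
    and unit_factor = "\<lambda>p. [:lead_coeff p:]"
    and euclidean_size = "\<lambda>p. if p = 0 then 0 else 2 ^ degree p"
    and divide = divide and modulo = modulo
  rewrites "dvd.dvd (times :: 'a poly \<Rightarrow> _) = Rings.dvd"
    and "comm_monoid_mult.prod_mset times 1 = prod_mset"
    and "comm_semiring_1.irreducible times 1 0 = irreducible"
    and "comm_semiring_1.prime_elem times 1 0 = prime_elem"
    and "power.power (1 :: 'a poly) times = power"
proof -
  show "power.power (1 :: 'a poly) times = power"
    by (simp add: power_dict)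
  show "dvd.dvd (times :: 'a poly \<Rightarrow> _) = Rings.dvd"
    by (simp add: dvd_dict)
  show "comm_monoid_mult.prod_mset times 1 = prod_mset"
    by (simp add: prod_mset_dict)
  show "comm_semiring_1.irreducible times 1 0 = irreducible"
    by (simp add: irreducible_dict)
  show "comm_semiring_1.prime_elem times 1 0 = prime_elem"
    by (simp add: prime_elem_dict)
  show "class.normalization_euclidean_semiring_multiplicative divide plus minus (0 :: 'a poly) times 1
    modulo (\<lambda>p. if p = 0 then 0 else 2 ^ degree p)
    (\<lambda>p. [:lead_coeff p:]) (\<lambda>p. Polynomial.smult (inverse (lead_coeff p)) p)"
  proof (standard, fold dvd_dict)
    fix p :: "'a poly"
    show "[:lead_coeff p:] * Polynomial.smult (inverse (lead_coeff p)) p = p"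
      by (cases "p = 0") simp_all
  next
    fix p :: "'a poly" assume "is_unit p"
    then show "[:lead_coeff p:] = p"
      by (elim is_unit_polyE) (auto simp: monom_0 one_poly_def field_simps)
  next
    fix p :: "'a poly" assume "p \<noteq> 0"
    then show "is_unit [:lead_coeff p:]"
      by (simp add: is_unit_pCons_iff)
  next
    fix a b :: "'a poly" assume "is_unit a"
    thus "[:lead_coeff (a * b):] = a * [:lead_coeff b:]"
    proof (elim is_unit_polyE)
      fix c assume a: "a = [:c:]" "c dvd 1"
      show "[:lead_coeff (a * b):] = a * [:lead_coeff b:]" unfolding a by (simp add: lead_coeff_mult)
    qed
  qed (auto simp: lead_coeff_mult Rings.div_mult_mod_eq intro!: degree_mod_less' degree_mult_right_le)
qed

lemma not_dvd_prime_power: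
  fixes f g :: "'a :: field poly"
  assumes "f \<noteq> 0" "g \<noteq> 0" "\<not> f dvd g"
  shows "\<exists>\<pi> e. prime_elem \<pi> \<and> \<pi> ^ e dvd f \<and> \<not> \<pi> ^ e dvd g"
proof -
  obtain \<pi> where pr: "field_poly.prime \<pi>" and lt: "field_poly.multiplicity \<pi> f > field_poly.multiplicity \<pi> g"
    using field_poly.multiplicity_le_imp_dvd[OF assms(1), of g] assms(3) by force
  have "\<pi> ^ field_poly.multiplicity \<pi> f dvd f" by (rule field_poly.multiplicity_dvd)
  moreover have "\<not> \<pi> ^ field_poly.multiplicity \<pi> f dvd g"
    using lt field_poly.multiplicity_geI[of g \<pi> "field_poly.multiplicity \<pi> f"] assms(2) pr
    by (metis field_poly.not_prime_unit leD)
  moreover have "prime_elem \<pi>" using pr by (simp add: field_poly.prime_def)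
  ultimately show ?thesis by blast
qed

lemma prime_divisor_exists_field_poly:
  fixes f :: "'a :: field poly"
  assumes "f \<noteq> 0" "\<not> is_unit f"
  shows "\<exists>\<sigma>. prime_elem \<sigma> \<and> \<sigma> dvd f"
  using field_poly.prime_divisor_exists[OF assms] by (auto simp: field_poly.prime_def)

lemma prime_dvd_assoc:
  fixes \<sigma> \<pi> :: "'a :: field poly"
  assumes "prime_elem \<pi>" "\<not> is_unit \<sigma>" "\<sigma> dvd \<pi>"
  shows "\<pi> dvd \<sigma>"
proof -
  obtain c where c: "\<pi> = \<sigma> * c" using assms(3) unfolding dvd_def by blast
  have "\<pi> dvd \<sigma> \<or> \<pi> dvd c" by (metis assms(1) c dvd_refl prime_elem_dvd_multD)
  moreover have "\<not> \<pi> dvd c"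
  proof
    assume "\<pi> dvd c"
    then obtain d where "c = \<pi> * d" unfolding dvd_def by blast
    then have "\<pi> * 1 = \<pi> * (\<sigma> * d)" using c by (simp add: ac_simps)
    then have "\<sigma> * d = 1" using prime_elem_not_zeroI[OF assms(1)] by (metis mult_left_cancel)
    then have "is_unit \<sigma>" by (metis dvd_triv_left)
    then show False using assms(2) by simp
  qed
  ultimately show ?thesis by blast
qed

lemma coprime_power_right:
  fixes \<pi> g q :: "'a :: field poly"
  assumes pr: "prime_elem \<pi>" and ng: "\<not> \<pi> dvd g" and d: "g dvd \<pi> ^ e * q"
  shows "g dvd q"
proof (cases "q = 0")
  case True then show ?thesis by simp
next
  case q0: False
  have g0: "g \<noteq> 0" using ng by auto
  have pu: "\<not> is_unit \<pi>" using pr by (rule prime_elem_not_unit)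
  have p0: "\<pi> \<noteq> 0" using pr by (simp add: prime_elem_not_unit prime_elem_not_zeroI)
  show ?thesis
  proof (rule field_poly.multiplicity_le_imp_dvd[OF g0])
    fix \<sigma> :: "'a poly" assume s: "field_poly.prime \<sigma>"
    then have spr: "prime_elem \<sigma>" by (simp add: field_poly.prime_def)
    then have su: "\<not> is_unit \<sigma>" by (rule prime_elem_not_unit)
    have le: "field_poly.multiplicity \<sigma> g \<le> field_poly.multiplicity \<sigma> (\<pi> ^ e * q)"
      using d q0 p0 by (intro field_poly.dvd_imp_multiplicity_le) auto
    also have "\<dots> = e * field_poly.multiplicity \<sigma> \<pi> + field_poly.multiplicity \<sigma> q"
      using spr q0 p0 by (simp add: field_poly.prime_elem_multiplicity_mult_distrib field_poly.prime_elem_multiplicity_power_distrib)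
    finally have le2: "field_poly.multiplicity \<sigma> g \<le> e * field_poly.multiplicity \<sigma> \<pi> + field_poly.multiplicity \<sigma> q" .
    show "field_poly.multiplicity \<sigma> g \<le> field_poly.multiplicity \<sigma> q"
    proof (cases "field_poly.multiplicity \<sigma> \<pi> = 0")
      case True then show ?thesis using le2 by simp
    next
      case False
      then have "\<sigma> dvd \<pi>" using field_poly.multiplicity_eq_zero_iff p0 su by (metis field_poly.not_dvd_imp_multiplicity_0)
      then have pis: "\<pi> dvd \<sigma>" using prime_dvd_assoc[OF pr su] by simp
      have "field_poly.multiplicity \<sigma> g = 0"
      proof (rule ccontr)
        assume "field_poly.multiplicity \<sigma> g \<noteq> 0"
        then have "\<sigma> dvd g" by (metis field_poly.not_dvd_imp_multiplicity_0)
        then show False using pis ng dvd_trans by blast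
      qed
      then show ?thesis by simp
    qed
  qed
qed

lemma coprime_power_left:
  fixes \<pi> g q :: "'a :: field poly"
  assumes pr: "prime_elem \<pi>" and ng: "\<not> \<pi> dvd g"
  shows "\<pi> ^ e dvd g * q \<Longrightarrow> \<pi> ^ e dvd q"
proof (induct e arbitrary: q)
  case 0 then show ?case by simp
next
  case (Suc e)
  have "\<pi> dvd g * q" using Suc(2) by (metis dvd_mult_left power_Suc)
  then have "\<pi> dvd q" using pr ng by (simp add: prime_elem_dvd_mult_iff)
  then obtain q' where q': "q = \<pi> * q'" unfolding dvd_def by blast
  have p0: "\<pi> \<noteq> 0" using pr by (simp add: prime_elem_not_unit prime_elem_not_zeroI)
  have "\<pi> * \<pi> ^ e dvd \<pi> * (g * q')" using Suc(2) q' by (simp add: ac_simps)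
  then have "\<pi> ^ e dvd g * q'" using p0 by simp
  then have "\<pi> ^ e dvd q'" by (rule Suc(1))
  then show ?case using q' by simp
qed
end

lemma pme_dims[simp]: assumes A: "A \<in> carrier_mat n n"
  shows "dim_row (poly_mat_eval n p A) = n" "dim_col (poly_mat_eval n p A) = n"
  using pme_carrier[OF A, of p] by auto

lemma pmv_add: assumes A: "A \<in> carrier_mat n n" and u: "u \<in> carrier_vec n"
  shows "poly_mat_eval n (p + q) A *\<^sub>v u = poly_mat_eval n p A *\<^sub>v u + poly_mat_eval n q A *\<^sub>v u"
  using A u by (simp add: pme_add add_mult_distrib_mat_vec[where nr=n and nc=n])

lemma pmv_carrier[simp]: "A \<in> carrier_mat n n \<Longrightarrow> poly_mat_eval n p A *\<^sub>v u \<in> carrier_vec n"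
  by (metis carrier_matD(1) carrier_vecI dim_mult_mat_vec pme_carrier)

lemma pmv_zero: assumes A: "A \<in> carrier_mat n n"
  shows "poly_mat_eval n p A *\<^sub>v 0\<^sub>v n = 0\<^sub>v n"
  using A pme_carrier[OF A, of p] by (intro eq_vecI) (auto simp: scalar_prod_def)

lemma pmv_0: assumes A: "A \<in> carrier_mat n n" and u: "u \<in> carrier_vec n"
  shows "poly_mat_eval n 0 A *\<^sub>v u = 0\<^sub>v n"
  using A u by (intro eq_vecI) (auto simp: scalar_prod_def)

lemma mult_mat_vec_uminus: assumes "X \<in> carrier_mat nr n" "(w :: 'a :: ring vec) \<in> carrier_vec n"
  shows "X *\<^sub>v (- w) = - (X *\<^sub>v w)"
  using assms by (intro eq_vecI) auto

lemma pmv_comm: assumes A: "A \<in> carrier_mat n n" and u: "u \<in> carrier_vec n"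
  shows "poly_mat_eval n p A *\<^sub>v (poly_mat_eval n q A *\<^sub>v u) = poly_mat_eval n q A *\<^sub>v (poly_mat_eval n p A *\<^sub>v u)"
  using pme_mv[OF A u, of p q] pme_mv[OF A u, of q p] by (simp add: mult.commute)

lemma gen_exists: fixes A :: "'a::field mat"
  assumes A: "A \<in> carrier_mat n n" and u: "u \<in> carrier_vec n"
    and p: "p \<noteq> 0" "poly_mat_eval n p A = 0\<^sub>m n n"
  shows "\<exists>g. g \<noteq> 0 \<and> gen n A u g"
proof -
  define S where "S = {q. q \<noteq> 0 \<and> poly_mat_eval n q A *\<^sub>v u = 0\<^sub>v n}"
  have pS: "p \<in> S" unfolding S_def using p u by auto
  define m where "m = (LEAST d. \<exists>q\<in>S. degree q = d)"
  have "\<exists>q\<in>S. degree q = m" unfolding m_def using pS by (intro LeastI_ex[of "\<lambda>d. \<exists>q\<in>S. degree q = d"]) auto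
  then obtain g where gS: "g \<in> S" and dg: "degree g = m" by auto
  have minS: "m \<le> degree q" if "q \<in> S" for q unfolding m_def using that by (intro Least_le) auto
  have g0: "g \<noteq> 0" and gu: "poly_mat_eval n g A *\<^sub>v u = 0\<^sub>v n" using gS unfolding S_def by auto
  have "gen n A u g" unfolding gen_def
  proof (intro allI iffI)
    fix q assume q: "poly_mat_eval n q A *\<^sub>v u = 0\<^sub>v n"
    have "q = (q div g) * g + q mod g" by simp
    then have "poly_mat_eval n q A *\<^sub>v u = poly_mat_eval n ((q div g) * g) A *\<^sub>v u + poly_mat_eval n (q mod g) A *\<^sub>v u"
      using A u pmv_add by metis
    also have "poly_mat_eval n ((q div g) * g) A *\<^sub>v u = 0\<^sub>v n"
      using A u gu by (simp add: pme_mv pmv_zero)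
    finally have "poly_mat_eval n (q mod g) A *\<^sub>v u = 0\<^sub>v n" using q A u by simp
    moreover have "q mod g \<noteq> 0 \<Longrightarrow> degree (q mod g) < degree g" using g0 degree_mod_less by blast
    ultimately have "q mod g = 0" using minS[of "q mod g"] dg unfolding S_def by fastforce
    then show "g dvd q" by (simp add: mod_eq_0_iff_dvd)
  next
    fix q assume "g dvd q"
    then obtain r where "q = r * g" by (metis dvd_def mult.commute)
    then show "poly_mat_eval n q A *\<^sub>v u = 0\<^sub>v n" using A u gu by (simp add: pme_mv pmv_zero)
  qed
  then show ?thesis using g0 by blast
qed

lemma gen_factor: fixes A :: "'a::field mat"
  assumes A: "A \<in> carrier_mat n n" and u: "u \<in> carrier_vec n"
    and g: "gen n A u g" and gh: "g = h * h'" and g0: "g \<noteq> 0"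
  shows "gen n A (poly_mat_eval n h' A *\<^sub>v u) h"
  unfolding gen_def
proof
  fix q
  have h'0: "h' \<noteq> 0" using g0 gh by auto
  have "poly_mat_eval n q A *\<^sub>v (poly_mat_eval n h' A *\<^sub>v u) = poly_mat_eval n (q * h') A *\<^sub>v u"
    using A u by (simp add: pme_mv)
  then show "(poly_mat_eval n q A *\<^sub>v (poly_mat_eval n h' A *\<^sub>v u) = 0\<^sub>v n) = (h dvd q)"
    using g h'0 unfolding gen_def gh by simp
qed

lemma gen_coprime: fixes A :: "'a::field mat"
  assumes A: "A \<in> carrier_mat n n" and u1: "u1 \<in> carrier_vec n" and u2: "u2 \<in> carrier_vec n"
    and g1: "gen n A u1 g1" and g2: "gen n A u2 g2"
    and H1: "\<And>q. g1 dvd g2 * q \<Longrightarrow> g1 dvd q" and H2: "\<And>q. g2 dvd g1 * q \<Longrightarrow> g2 dvd q"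
  shows "gen n A (u1 + u2) (g1 * g2)"
  unfolding gen_def
proof (intro allI iffI)
  fix q assume q: "poly_mat_eval n q A *\<^sub>v (u1 + u2) = 0\<^sub>v n"
  have sum: "poly_mat_eval n q A *\<^sub>v u1 + poly_mat_eval n q A *\<^sub>v u2 = 0\<^sub>v n"
    using q A u1 u2 by (simp add: mult_add_distrib_mat_vec[where nr=n and nc=n])
  have e1: "poly_mat_eval n q A *\<^sub>v u1 = - (poly_mat_eval n q A *\<^sub>v u2)"
  proof (intro eq_vecI)
    fix i assume i: "i < dim_vec (- (poly_mat_eval n q A *\<^sub>v u2))"
    then have i': "i < n" using A pme_dims[OF A, of q] by simp
    have "(poly_mat_eval n q A *\<^sub>v u1 + poly_mat_eval n q A *\<^sub>v u2) $ i = 0" using sum i' by simp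
    then show "(poly_mat_eval n q A *\<^sub>v u1) $ i = (- (poly_mat_eval n q A *\<^sub>v u2)) $ i"
      using i' A by (simp add: eq_neg_iff_add_eq_0)
  qed (use A in simp)
  have "poly_mat_eval n (g2 * q) A *\<^sub>v u1 = poly_mat_eval n g2 A *\<^sub>v (- (poly_mat_eval n q A *\<^sub>v u2))"
    using A u1 by (simp add: pme_mv e1)
  also have "\<dots> = - (poly_mat_eval n (q * g2) A *\<^sub>v u2)"
    using A u2 by (simp add: pme_mv mult_mat_vec_uminus[of _ n n] pmv_comm[OF A u2, of g2 q])
  also have "poly_mat_eval n (q * g2) A *\<^sub>v u2 = 0\<^sub>v n" using g2 unfolding gen_def by simp
  finally have "g1 dvd g2 * q" using g1 unfolding gen_def by simp
  then have d1: "g1 dvd q" using H1 by blast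
  have "poly_mat_eval n (g1 * q) A *\<^sub>v u2 = poly_mat_eval n g1 A *\<^sub>v (- (poly_mat_eval n q A *\<^sub>v u1))"
    using A u2 e1 by (simp add: pme_mv)
  also have "\<dots> = - (poly_mat_eval n (q * g1) A *\<^sub>v u1)"
    using A u1 by (simp add: pme_mv mult_mat_vec_uminus[of _ n n] pmv_comm[OF A u1, of g1 q])
  also have "poly_mat_eval n (q * g1) A *\<^sub>v u1 = 0\<^sub>v n" using g1 unfolding gen_def by simp
  finally have "g2 dvd g1 * q" using g2 unfolding gen_def by simp
  then have d2: "g2 dvd q" using H2 by blast
  obtain t where t: "q = g1 * t" using d1 unfolding dvd_def by blast
  have "g2 dvd t" using d2 H2 t by blast
  then show "g1 * g2 dvd q" using t by simp
next
  fix q assume "g1 * g2 dvd q"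
  then obtain r where r: "q = (r * g2) * g1" by (metis dvd_def mult.commute mult.assoc)
  have z1: "poly_mat_eval n q A *\<^sub>v u1 = 0\<^sub>v n" using g1 r unfolding gen_def by simp
  have r2: "q = (r * g1) * g2" using r by (simp add: ac_simps)
  have z2: "poly_mat_eval n q A *\<^sub>v u2 = 0\<^sub>v n" using g2 r2 unfolding gen_def by simp
  show "poly_mat_eval n q A *\<^sub>v (u1 + u2) = 0\<^sub>v n"
    using z1 z2 A u1 u2 by (simp add: mult_add_distrib_mat_vec[where nr=n and nc=n])
qed

lemma mat_zero_if_mult_vec: fixes X :: "'a :: field mat" assumes X: "X \<in> carrier_mat n n"
  and z: "\<And>u. u \<in> carrier_vec n \<Longrightarrow> X *\<^sub>v u = 0\<^sub>v n"
  shows "X = 0\<^sub>m n n"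
proof (rule eq_matI)
  fix i j assume i: "i < dim_row (0\<^sub>m n n :: 'a mat)" and j: "j < dim_col (0\<^sub>m n n :: 'a mat)"
  have "(X *\<^sub>v unit_vec n j) $ i = 0" using z[of "unit_vec n j"] i by simp
  then show "X $$ (i, j) = 0\<^sub>m n n $$ (i, j)" using X i j by simp
qed (use X in auto)

lemma cyclic_exists:
  fixes A :: "'a :: field mat"
  assumes A: "A \<in> carrier_mat n n" and p0: "p \<noteq> 0" and pA: "poly_mat_eval n p A = 0\<^sub>m n n"
    and minp: "\<And>q. q \<noteq> 0 \<Longrightarrow> poly_mat_eval n q A = 0\<^sub>m n n \<Longrightarrow> n \<le> degree q"
  shows "\<exists>v \<in> carrier_vec n. \<forall>q. q \<noteq> 0 \<longrightarrow> degree q < n \<longrightarrow> poly_mat_eval n q A *\<^sub>v v \<noteq> 0\<^sub>v n"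
proof -
  define Dg where "Dg = {d. \<exists>u g. u \<in> carrier_vec n \<and> g \<noteq> 0 \<and> gen n A u g \<and> degree g = d}"
  have bound: "degree g \<le> degree p" if "u \<in> carrier_vec n" "gen n A u g" for u g
  proof -
    have "poly_mat_eval n p A *\<^sub>v u = 0\<^sub>v n" using pA that(1) by (intro eq_vecI) auto
    then have "g dvd p" using that(2) unfolding gen_def by simp
    then show ?thesis using p0 by (rule dvd_imp_degree_le)
  qed
  have fin: "finite Dg"
    by (rule finite_subset[of _ "{..degree p}"]) (auto simp: Dg_def dest: bound)
  have "gen n A (0\<^sub>v n) 1" unfolding gen_def using A by (simp add: pmv_zero)
  then have "0 \<in> Dg" unfolding Dg_def by (intro CollectI exI[of _ "0\<^sub>v n"] exI[of _ 1]) auto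
  then have "Max Dg \<in> Dg" using fin by (intro Max_in) auto
  then obtain v g where v: "v \<in> carrier_vec n" and g0: "g \<noteq> 0" and gv: "gen n A v g"
    and dg: "degree g = Max Dg" unfolding Dg_def by blast
  have maxD: "degree h \<le> degree g" if "w \<in> carrier_vec n" "h \<noteq> 0" "gen n A w h" for w h
    using that fin unfolding dg by (intro Max_ge) (auto simp: Dg_def)
  have big: "n \<le> degree g"
  proof (rule ccontr)
    assume lt: "\<not> n \<le> degree g"
    have "poly_mat_eval n g A \<noteq> 0\<^sub>m n n" using minp[OF g0] lt by auto
    then obtain u where u: "u \<in> carrier_vec n" and gu: "poly_mat_eval n g A *\<^sub>v u \<noteq> 0\<^sub>v n"
      using mat_zero_if_mult_vec[of "poly_mat_eval n g A" n] A by auto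
    obtain f where f0: "f \<noteq> 0" and gf: "gen n A u f" using gen_exists[OF A u p0 pA] by auto
    have nfg: "\<not> f dvd g" using gf gu unfolding gen_def by simp
    obtain \<pi> e where pr: "prime_elem \<pi>" and pf: "\<pi> ^ e dvd f" and pg: "\<not> \<pi> ^ e dvd g"
      using not_dvd_prime_power[OF f0 g0 nfg] by auto
    have pu: "\<not> is_unit \<pi>" using pr by (rule prime_elem_not_unit)
    have pi0: "\<pi> \<noteq> 0" using pr by (rule prime_elem_not_zeroI)
    define s where "s = (LEAST s. \<not> \<pi> ^ Suc s dvd g)"
    have "\<exists>s. \<not> \<pi> ^ Suc s dvd g" using pg by (cases e) auto
    then have ns: "\<not> \<pi> ^ Suc s dvd g" unfolding s_def by (rule LeastI_ex)
    have ps: "\<pi> ^ s dvd g"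
    proof (cases s)
      case 0 then show ?thesis by simp
    next
      case (Suc s')
      then have "s' < s" by simp
      then have "\<pi> ^ Suc s' dvd g" unfolding s_def using not_less_Least by blast
      then show ?thesis using Suc by simp
    qed
    have se: "Suc s \<le> e"
    proof (rule ccontr)
      assume "\<not> Suc s \<le> e"
      then have "e \<le> s" by simp
      then have "\<pi> ^ e dvd \<pi> ^ s" by (rule le_imp_power_dvd)
      then show False using ps pg dvd_trans by blast
    qed
    obtain g1 where g1: "g = \<pi> ^ s * g1" using ps unfolding dvd_def by blast
    have ng1: "\<not> \<pi> dvd g1"
    proof
      assume "\<pi> dvd g1"
      then have "\<pi> ^ s * \<pi> dvd g" unfolding g1 by simp
      then show False using ns by (simp add: ac_simps)
    qed
    have g10: "g1 \<noteq> 0" using g0 g1 by auto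
    have "\<pi> ^ Suc s dvd f" using se pf by (meson dvd_trans le_imp_power_dvd)
    then obtain f1 where f1: "f = \<pi> ^ Suc s * f1" unfolding dvd_def by blast
    define u' where "u' = poly_mat_eval n f1 A *\<^sub>v u"
    define v' where "v' = poly_mat_eval n (\<pi> ^ s) A *\<^sub>v v"
    have gu': "gen n A u' (\<pi> ^ Suc s)" unfolding u'_def using gen_factor[OF A u gf f1 f0] .
    have gv': "gen n A v' g1" unfolding v'_def using gen_factor[OF A v gv _ g0, of g1 "\<pi> ^ s"] g1
      by (simp add: ac_simps)
    have gw: "gen n A (u' + v') (\<pi> ^ Suc s * g1)"
    proof (rule gen_coprime[OF A _ _ gu' gv'])
      show "u' \<in> carrier_vec n" "v' \<in> carrier_vec n" unfolding u'_def v'_def using A by auto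
      show "\<pi> ^ Suc s dvd g1 * q \<Longrightarrow> \<pi> ^ Suc s dvd q" for q using coprime_power_left[OF pr ng1] by blast
      show "g1 dvd \<pi> ^ Suc s * q \<Longrightarrow> g1 dvd q" for q using coprime_power_right[OF pr ng1] by blast
    qed
    have w0: "\<pi> ^ Suc s * g1 \<noteq> 0" using pi0 g10 by simp
    have "degree (\<pi> ^ Suc s * g1) \<le> degree g"
      using maxD[OF _ w0 gw] A unfolding u'_def v'_def by auto
    moreover have "degree (\<pi> ^ Suc s * g1) = Suc s * degree \<pi> + degree g1"
      using pi0 g10 by (simp add: degree_mult_eq degree_power_eq)
    moreover have "degree g = s * degree \<pi> + degree g1"
      using pi0 g10 g1 by (simp add: degree_mult_eq degree_power_eq)
    moreover have "degree \<pi> > 0" using pu pi0 by (simp add: is_unit_iff_degree)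
    ultimately show False by simp
  qed
  show ?thesis
  proof (intro bexI[OF _ v] allI impI)
    fix q :: "'a poly" assume q0: "q \<noteq> 0" and dq: "degree q < n"
    show "poly_mat_eval n q A *\<^sub>v v \<noteq> 0\<^sub>v n"
    proof
      assume "poly_mat_eval n q A *\<^sub>v v = 0\<^sub>v n"
      then have "g dvd q" using gv unfolding gen_def by simp
      then have "degree g \<le> degree q" using q0 by (rule dvd_imp_degree_le)
      then show False using big dq by simp
    qed
  qed
qed

definition Hp :: "(nat \<Rightarrow> 'a::field) \<Rightarrow> 'a \<Rightarrow> nat \<Rightarrow> 'a poly" where
  "Hp d \<epsilon> j = (\<Prod>i<j. [:- d i, 1:] * [:- \<epsilon>, 1:])"

definition bp :: "(nat \<Rightarrow> 'a::field) \<Rightarrow> 'a \<Rightarrow> nat \<Rightarrow> 'a poly" where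
  "bp d \<epsilon> i = (if even i then Hp d \<epsilon> (i div 2) else [:- d (i div 2), 1:] * Hp d \<epsilon> (i div 2))"

definition dg0 :: "(nat \<Rightarrow> 'a::field) \<Rightarrow> 'a \<Rightarrow> nat \<Rightarrow> 'a" where
  "dg0 d \<epsilon> i = (if even i then d (i div 2) else \<epsilon>)"

lemma Hp_Suc: "Hp d \<epsilon> (Suc j) = Hp d \<epsilon> j * ([:- d j, 1:] * [:- \<epsilon>, 1:])"
  by (simp add: Hp_def)

lemma monic_mult_deg: fixes P Q :: "'a::field poly"
  assumes "degree P = a \<and> lead_coeff P = 1" "degree Q = b \<and> lead_coeff Q = 1"
  shows "degree (P * Q) = a + b \<and> lead_coeff (P * Q) = 1"
proof -
  have "P \<noteq> 0" "Q \<noteq> 0" using assms by auto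
  then have d: "degree (P * Q) = degree P + degree Q" by (rule degree_mult_eq)
  have l: "lead_coeff (P * Q) = lead_coeff P * lead_coeff Q" by (rule lead_coeff_mult)
  have "degree (P * Q) = a + b" using d assms by simp
  moreover have "lead_coeff (P * Q) = 1" by (simp only: l) (use assms in auto)
  ultimately show ?thesis by (rule conjI)
qed

lemma lin_monic: "degree [:- c, 1:] = 1 \<and> lead_coeff [:- c, 1:] = (1::'a::field)" by simp

lemma Hp_monic: "degree (Hp d \<epsilon> j) = 2 * j \<and> lead_coeff (Hp d \<epsilon> j) = 1"
proof (induct j)
  case 0 then show ?case by (simp add: Hp_def)
next
  case (Suc j)
  have q: "degree ([:- d j, 1:] * [:- \<epsilon>, 1:]) = 1 + 1 \<and> lead_coeff ([:- d j, 1:] * [:- \<epsilon>, 1:]) = 1"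
    by (rule monic_mult_deg[OF lin_monic lin_monic])
  have "degree (Hp d \<epsilon> j * ([:- d j, 1:] * [:- \<epsilon>, 1:])) = 2 * j + (1 + 1) \<and> lead_coeff (Hp d \<epsilon> j * ([:- d j, 1:] * [:- \<epsilon>, 1:])) = 1"
    by (rule monic_mult_deg[OF Suc q])
  then have "degree (Hp d \<epsilon> j * ([:- d j, 1:] * [:- \<epsilon>, 1:])) = 2 * Suc j"
    "lead_coeff (Hp d \<epsilon> j * ([:- d j, 1:] * [:- \<epsilon>, 1:])) = 1" by auto
  then show ?case unfolding Hp_Suc by auto
qed

lemma bp_monic: "degree (bp d \<epsilon> i) = i \<and> lead_coeff (bp d \<epsilon> i) = 1"
proof (cases "even i")
  case True
  then have "2 * (i div 2) = i" by simp
  then show ?thesis using True Hp_monic[of d \<epsilon> "i div 2"] unfolding bp_def by auto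
next
  case False
  have "degree ([:- d (i div 2), 1:] * Hp d \<epsilon> (i div 2)) = 1 + 2 * (i div 2) \<and> lead_coeff ([:- d (i div 2), 1:] * Hp d \<epsilon> (i div 2)) = 1"
    by (rule monic_mult_deg[OF lin_monic Hp_monic])
  moreover have "1 + 2 * (i div 2) = i" using False by presburger
  ultimately show ?thesis using False unfolding bp_def by auto
qed

lemma bp_deg[simp]: "degree (bp d \<epsilon> i) = i" using bp_monic by blast
lemma bp_lc[simp]: "coeff (bp d \<epsilon> i) i = 1" using bp_monic[of d \<epsilon> i] by simp
lemma bp_coeff_high: "i < m \<Longrightarrow> coeff (bp d \<epsilon> i) m = 0" by (simp add: coeff_eq_0)

lemma xrec1: "[:0, 1:] * (L * H) = H * (L * [:- e, 1:]) + Polynomial.smult e (L * H)" for L H :: "'a::field poly"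
proof -
  have x: "[:0, 1::'a:] = [:- e, 1:] + [:e:]" by simp
  have s: "Polynomial.smult e (L * H) = [:e:] * (L * H)" by simp
  show ?thesis unfolding s by (subst x, simp only: ring_distribs mult_ac)
qed

lemma xrec2: "[:0, 1:] * H = [:- e, 1:] * H + Polynomial.smult e H" for H :: "'a::field poly"
proof -
  have x: "[:0, 1::'a:] = [:- e, 1:] + [:e:]" by simp
  have s: "Polynomial.smult e H = [:e:] * H" by simp
  show ?thesis unfolding s by (subst x, simp only: ring_distribs mult_ac)
qed

lemma bp_rec: "[:0, 1:] * bp d \<epsilon> i = bp d \<epsilon> (Suc i) + Polynomial.smult (dg0 d \<epsilon> i) (bp d \<epsilon> i)"
proof (cases "even i")
  case True
  have "Suc i div 2 = i div 2" "odd (Suc i)" using True by presburger+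
  then have e: "bp d \<epsilon> (Suc i) = [:- d (i div 2), 1:] * Hp d \<epsilon> (i div 2)" "bp d \<epsilon> i = Hp d \<epsilon> (i div 2)"
    "dg0 d \<epsilon> i = d (i div 2)" using True unfolding bp_def dg0_def by auto
  show ?thesis unfolding e by (rule xrec2)
next
  case False
  have "Suc i div 2 = Suc (i div 2)" "even (Suc i)" using False by presburger+
  then have e: "bp d \<epsilon> (Suc i) = Hp d \<epsilon> (i div 2) * ([:- d (i div 2), 1:] * [:- \<epsilon>, 1:])"
    "bp d \<epsilon> i = [:- d (i div 2), 1:] * Hp d \<epsilon> (i div 2)"
    "dg0 d \<epsilon> i = \<epsilon>" using False unfolding bp_def dg0_def Hp_Suc[symmetric] by auto
  show ?thesis unfolding e by (rule xrec1)
qed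

lemma bp_expand: "q = 0 \<or> degree q < m \<Longrightarrow> \<exists>r. q = (\<Sum>i<m. Polynomial.smult (r i) (bp d \<epsilon> i))"
proof (induct m arbitrary: q)
  case 0 then show ?case by auto
next
  case (Suc m)
  define c where "c = coeff q m"
  define q' where "q' = q - Polynomial.smult c (bp d \<epsilon> m)"
  have d1: "degree q \<le> m" using Suc(2) by auto
  have d2: "degree (Polynomial.smult c (bp d \<epsilon> m)) \<le> m" using degree_smult_le[of c "bp d \<epsilon> m"] by simp
  have dq': "degree q' \<le> m" unfolding q'_def by (rule degree_diff_le[OF d1 d2])
  have cq': "coeff q' m = 0" unfolding q'_def c_def by simp
  have "q' = 0 \<or> degree q' < m"
  proof (cases "q' = 0")
    case False
    then have "degree q' \<noteq> m" using cq' leading_coeff_0_iff by metis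
    then show ?thesis using dq' by simp
  qed simp
  then obtain r where r: "q' = (\<Sum>i<m. Polynomial.smult (r i) (bp d \<epsilon> i))" using Suc(1) by blast
  define r' where "r' = r(m := c)"
  have "(\<Sum>i<Suc m. Polynomial.smult (r' i) (bp d \<epsilon> i)) = (\<Sum>i<m. Polynomial.smult (r' i) (bp d \<epsilon> i)) + Polynomial.smult c (bp d \<epsilon> m)"
    by (simp add: r'_def)
  also have "(\<Sum>i<m. Polynomial.smult (r' i) (bp d \<epsilon> i)) = q'" unfolding r r'_def by (intro sum.cong) auto
  also have "q' + Polynomial.smult c (bp d \<epsilon> m) = q" unfolding q'_def by simp
  finally have "q = (\<Sum>i<Suc m. Polynomial.smult (r' i) (bp d \<epsilon> i))" by (rule sym)
  then show ?case by (intro exI[of _ r'])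
qed

lemma bp_indep: "(\<Sum>i<m. Polynomial.smult (c i) (bp d \<epsilon> i)) = 0 \<Longrightarrow> \<forall>i<m. c i = 0"
proof (induct m)
  case 0 then show ?case by simp
next
  case (Suc m)
  have "coeff (\<Sum>i<Suc m. Polynomial.smult (c i) (bp d \<epsilon> i)) m = (\<Sum>i<m. c i * coeff (bp d \<epsilon> i) m) + c m"
    by (simp add: coeff_sum)
  also have "(\<Sum>i<m. c i * coeff (bp d \<epsilon> i) m) = 0" by (intro sum.neutral) (simp add: bp_coeff_high)
  finally have "c m = coeff (\<Sum>i<Suc m. Polynomial.smult (c i) (bp d \<epsilon> i)) m" by simp
  also have "\<dots> = 0" unfolding Suc(2) by simp
  finally have cm: "c m = 0" .
  then have "(\<Sum>i<m. Polynomial.smult (c i) (bp d \<epsilon> i)) = 0" using Suc(2) by simp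
  then have "\<forall>i<m. c i = 0" by (rule Suc(1))
  then show ?case using cm by (simp add: less_Suc_eq)
qed

lemma bp_sum_degree: "m > 0 \<Longrightarrow> degree (\<Sum>i<m. Polynomial.smult (c i) (bp d \<epsilon> i)) < m"
proof -
  assume m: "m > 0"
  have "degree (\<Sum>i<m. Polynomial.smult (c i) (bp d \<epsilon> i)) \<le> m - 1"
  proof (rule degree_sum_le)
    fix i assume "i \<in> {..<m}"
    then show "degree (Polynomial.smult (c i) (bp d \<epsilon> i)) \<le> m - 1"
      using degree_smult_le[of "c i" "bp d \<epsilon> i"] by simp
  qed simp
  then show ?thesis using m by simp
qed

definition Pm :: "nat \<Rightarrow> 'a::field mat \<Rightarrow> 'a vec \<Rightarrow> (nat \<Rightarrow> 'a) \<Rightarrow> 'a \<Rightarrow> 'a mat" where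
  "Pm n A v d \<epsilon> = mat n n (\<lambda>(i,j). (poly_mat_eval n (bp d \<epsilon> j) A *\<^sub>v v) $ i)"

definition Tent :: "nat \<Rightarrow> (nat \<Rightarrow> 'a::field) \<Rightarrow> 'a \<Rightarrow> (nat \<Rightarrow> 'a) \<Rightarrow> nat \<Rightarrow> nat \<Rightarrow> 'a" where
  "Tent n d \<epsilon> r i j = (if i = j then dg0 d \<epsilon> j else 0) + (if i = Suc j then 1 else 0) + (if j = n - 1 then - r i else 0)"

definition Tm :: "nat \<Rightarrow> (nat \<Rightarrow> 'a::field) \<Rightarrow> 'a \<Rightarrow> (nat \<Rightarrow> 'a) \<Rightarrow> 'a mat" where
  "Tm n d \<epsilon> r = mat n n (\<lambda>(i,j). Tent n d \<epsilon> r i j)"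

lemma pmv_sum: fixes m :: nat assumes A: "A \<in> carrier_mat n n" and v: "v \<in> carrier_vec n" and i: "i < n"
  shows "(poly_mat_eval n (\<Sum>j<m. f j) A *\<^sub>v v) $ i = (\<Sum>j<m. (poly_mat_eval n (f j) A *\<^sub>v v) $ i)"
proof (induct m)
  case 0 then show ?case using A v i by (simp add: pmv_0)
next
  case (Suc m)
  then show ?case using A v i by (simp add: pmv_add)
qed

lemma pmv_smult: assumes A: "A \<in> carrier_mat n n" and v: "v \<in> carrier_vec n" and i: "i < n"
  shows "(poly_mat_eval n (Polynomial.smult c q) A *\<^sub>v v) $ i = c * (poly_mat_eval n q A *\<^sub>v v) $ i"
  using A v i by (simp add: pme_smult scalar_prod_def sum_distrib_left ac_simps)

lemma Pm_carrier[simp]: "Pm n A v d \<epsilon> \<in> carrier_mat n n" by (simp add: Pm_def)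
lemma Tm_carrier[simp]: "Tm n d \<epsilon> r \<in> carrier_mat n n" by (simp add: Tm_def)
lemma Pm_dims[simp]: "dim_row (Pm n A v d \<epsilon>) = n" "dim_col (Pm n A v d \<epsilon>) = n" by (simp_all add: Pm_def)
lemma Tm_dims[simp]: "dim_row (Tm n d \<epsilon> r) = n" "dim_col (Tm n d \<epsilon> r) = n" by (simp_all add: Tm_def)

lemma Pm_mv: assumes A: "A \<in> carrier_mat n n" and v: "v \<in> carrier_vec n" and c: "c \<in> carrier_vec n"
  shows "Pm n A v d \<epsilon> *\<^sub>v c = poly_mat_eval n (\<Sum>j<n. Polynomial.smult (c $ j) (bp d \<epsilon> j)) A *\<^sub>v v"
proof (rule eq_vecI)
  fix i assume "i < dim_vec (poly_mat_eval n (\<Sum>j<n. Polynomial.smult (c $ j) (bp d \<epsilon> j)) A *\<^sub>v v)"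
  then have i: "i < n" using A by simp
  have "(Pm n A v d \<epsilon> *\<^sub>v c) $ i = (\<Sum>j<n. (poly_mat_eval n (bp d \<epsilon> j) A *\<^sub>v v) $ i * c $ j)"
    using i c by (simp add: Pm_def scalar_prod_def atLeast0LessThan)
  also have "\<dots> = (\<Sum>j<n. (poly_mat_eval n (Polynomial.smult (c $ j) (bp d \<epsilon> j)) A *\<^sub>v v) $ i)"
    by (rule sum.cong[OF refl], subst pmv_smult[OF A v i], rule mult.commute)
  also have "\<dots> = (poly_mat_eval n (\<Sum>j<n. Polynomial.smult (c $ j) (bp d \<epsilon> j)) A *\<^sub>v v) $ i"
    by (rule pmv_sum[OF A v i, symmetric])
  finally show "(Pm n A v d \<epsilon> *\<^sub>v c) $ i = (poly_mat_eval n (\<Sum>j<n. Polynomial.smult (c $ j) (bp d \<epsilon> j)) A *\<^sub>v v) $ i" .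
qed (use A in simp)

lemma sum_delta_poly: fixes n :: nat shows "j < n \<Longrightarrow> (\<Sum>i<n. Polynomial.smult (if i = j then x else 0) (f i)) = Polynomial.smult x (f j)"
proof -
  assume j: "j < n"
  have "(\<Sum>i<n. Polynomial.smult (if i = j then x else 0) (f i)) = (\<Sum>i<n. if i = j then Polynomial.smult x (f i) else 0)"
    by (intro sum.cong) auto
  also have "\<dots> = Polynomial.smult x (f j)" using j by (subst sum.delta) auto
  finally show ?thesis .
qed

lemma col_identity:
  assumes n: "n = 2 * k" "k > 0" and j: "j < n"
    and hexp: "p - Hp d \<epsilon> k = (\<Sum>i<n. Polynomial.smult (r i) (bp d \<epsilon> i))"
  shows "[:0, 1:] * bp d \<epsilon> j = (\<Sum>i<n. Polynomial.smult (Tent n d \<epsilon> r i j) (bp d \<epsilon> i)) + (if j = n - 1 then p else 0)"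
proof -
  have split: "(\<Sum>i<n. Polynomial.smult (Tent n d \<epsilon> r i j) (bp d \<epsilon> i)) =
     (\<Sum>i<n. Polynomial.smult (if i = j then dg0 d \<epsilon> j else 0) (bp d \<epsilon> i)) +
     (\<Sum>i<n. Polynomial.smult (if i = Suc j then 1 else 0) (bp d \<epsilon> i)) +
     (\<Sum>i<n. Polynomial.smult (if j = n - 1 then - r i else 0) (bp d \<epsilon> i))"
    unfolding Tent_def by (simp add: smult_add_left sum.distrib)
  have s1: "(\<Sum>i<n. Polynomial.smult (if i = j then dg0 d \<epsilon> j else 0) (bp d \<epsilon> i)) = Polynomial.smult (dg0 d \<epsilon> j) (bp d \<epsilon> j)"
    using j by (rule sum_delta_poly)
  show ?thesis
  proof (cases "j = n - 1")
    case True
    have s2: "(\<Sum>i<n. Polynomial.smult (if i = Suc j then 1 else 0) (bp d \<epsilon> i)) = 0"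
      using True n by (intro sum.neutral) auto
    have s3: "(\<Sum>i<n. Polynomial.smult (if j = n - 1 then - r i else 0) (bp d \<epsilon> i)) = - (p - Hp d \<epsilon> k)"
      using True unfolding hexp by (simp add: sum_negf)
    have "bp d \<epsilon> (Suc j) = Hp d \<epsilon> k" using True n by (simp add: bp_def)
    then show ?thesis unfolding split s1 s2 s3 bp_rec using True by simp
  next
    case False
    then have sj: "Suc j < n" using j by simp
    have s2: "(\<Sum>i<n. Polynomial.smult (if i = Suc j then 1 else 0) (bp d \<epsilon> i)) = bp d \<epsilon> (Suc j)"
      using sum_delta_poly[OF sj, of 1 "bp d \<epsilon>"] by simp
    have s3: "(\<Sum>i<n. Polynomial.smult (if j = n - 1 then - r i else 0) (bp d \<epsilon> i)) = 0"
      using False by simp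
    show ?thesis unfolding split s1 s2 s3 bp_rec using False by simp
  qed
qed

lemma AP_PT:
  assumes A: "A \<in> carrier_mat n n" and v: "v \<in> carrier_vec n" and n: "n = 2 * k" "k > 0"
    and pA: "poly_mat_eval n p A = 0\<^sub>m n n"
    and hexp: "p - Hp d \<epsilon> k = (\<Sum>i<n. Polynomial.smult (r i) (bp d \<epsilon> i))"
  shows "A * Pm n A v d \<epsilon> = Pm n A v d \<epsilon> * Tm n d \<epsilon> r"
proof (rule eq_matI)
  fix i j assume i: "i < dim_row (Pm n A v d \<epsilon> * Tm n d \<epsilon> r)" and j: "j < dim_col (Pm n A v d \<epsilon> * Tm n d \<epsilon> r)"
  then have i: "i < n" and j: "j < n" by auto
  have cP: "col (Pm n A v d \<epsilon>) j = poly_mat_eval n (bp d \<epsilon> j) A *\<^sub>v v"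
    using j A by (intro eq_vecI) (auto simp: Pm_def)
  have cT: "col (Tm n d \<epsilon> r) j = vec n (\<lambda>i. Tent n d \<epsilon> r i j)"
    using j by (intro eq_vecI) (auto simp: Tm_def)
  have "(A * Pm n A v d \<epsilon>) $$ (i, j) = (A *\<^sub>v col (Pm n A v d \<epsilon>) j) $ i"
    using i j A by simp
  also have "\<dots> = (poly_mat_eval n ([:0, 1:] * bp d \<epsilon> j) A *\<^sub>v v) $ i"
    unfolding cP pme_mv[OF A v] pme_x[OF A] ..
  also have "\<dots> = (poly_mat_eval n ((\<Sum>l<n. Polynomial.smult (Tent n d \<epsilon> r l j) (bp d \<epsilon> l)) + (if j = n - 1 then p else 0)) A *\<^sub>v v) $ i"
    using col_identity[OF n j hexp] by simp
  also have "\<dots> = (poly_mat_eval n (\<Sum>l<n. Polynomial.smult (Tent n d \<epsilon> r l j) (bp d \<epsilon> l)) A *\<^sub>v v) $ i"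
  proof -
    have "poly_mat_eval n (if j = n - 1 then p else 0) A *\<^sub>v v = 0\<^sub>v n"
      using pA A v by (cases "j = n - 1") (auto simp: pmv_0 intro!: eq_vecI)
    then show ?thesis using A v i by (simp add: pmv_add)
  qed
  also have "\<dots> = (Pm n A v d \<epsilon> *\<^sub>v col (Tm n d \<epsilon> r) j) $ i"
    using Pm_mv[OF A v, of "col (Tm n d \<epsilon> r) j" d \<epsilon>] j unfolding cT by simp
  also have "\<dots> = (Pm n A v d \<epsilon> * Tm n d \<epsilon> r) $$ (i, j)" using i j by simp
  finally show "(A * Pm n A v d \<epsilon>) $$ (i, j) = (Pm n A v d \<epsilon> * Tm n d \<epsilon> r) $$ (i, j)" .
qed (use A in auto)

lemma inv_from_inj:
  fixes X :: "'a :: field mat"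
  assumes X: "X \<in> carrier_mat n n" and inj: "\<And>c. c \<in> carrier_vec n \<Longrightarrow> X *\<^sub>v c = 0\<^sub>v n \<Longrightarrow> c = 0\<^sub>v n"
  shows "\<exists>Y \<in> carrier_mat n n. X * Y = 1\<^sub>m n \<and> Y * X = 1\<^sub>m n"
proof -
  have "det X \<noteq> 0" using det_0_iff_vec_prod_zero_field[OF X] inj by auto
  then have "X \<in> Units (ring_mat TYPE('a) n ())" by (rule det_non_zero_imp_unit[OF X])
  then show ?thesis unfolding Units_def by (auto simp: ring_mat_def)
qed

lemma mat_trace_mult_comm:
  fixes X :: "'a :: comm_ring_1 mat"
  assumes X: "X \<in> carrier_mat n m" and Y: "Y \<in> carrier_mat m n"
  shows "mat_trace (X * Y) = mat_trace (Y * X)"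
proof -
  have "mat_trace (X * Y) = (\<Sum>i<n. \<Sum>k<m. X $$ (i, k) * Y $$ (k, i))"
    using X Y by (simp add: mat_trace_def scalar_prod_def atLeast0LessThan)
  also have "\<dots> = (\<Sum>k<m. \<Sum>i<n. Y $$ (k, i) * X $$ (i, k))"
    by (subst sum.swap) (simp add: ac_simps)
  also have "\<dots> = mat_trace (Y * X)"
    using X Y by (simp add: mat_trace_def scalar_prod_def atLeast0LessThan)
  finally show ?thesis .
qed

lemma Pm_inj:
  assumes A: "A \<in> carrier_mat n n" and v: "v \<in> carrier_vec n" and n0: "n > 0"
    and cyc: "\<forall>q. q \<noteq> 0 \<longrightarrow> degree q < n \<longrightarrow> poly_mat_eval n q A *\<^sub>v v \<noteq> 0\<^sub>v n"
    and c: "c \<in> carrier_vec n" and z: "Pm n A v d \<epsilon> *\<^sub>v c = 0\<^sub>v n"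
  shows "c = 0\<^sub>v n"
proof -
  define q where "q = (\<Sum>j<n. Polynomial.smult (c $ j) (bp d \<epsilon> j))"
  have "poly_mat_eval n q A *\<^sub>v v = 0\<^sub>v n" using z Pm_mv[OF A v c] unfolding q_def by simp
  moreover have "degree q < n" unfolding q_def using n0 by (rule bp_sum_degree)
  ultimately have "q = 0" using cyc by blast
  then have "\<forall>j<n. c $ j = 0" unfolding q_def by (rule bp_indep)
  then show ?thesis using c by (intro eq_vecI) auto
qed

lemma trace_Tm: assumes n0: "n > 0"
  shows "mat_trace (Tm n d \<epsilon> r) = (\<Sum>i<n. dg0 d \<epsilon> i) - r (n - 1)"
proof -
  have "mat_trace (Tm n d \<epsilon> r) = (\<Sum>i<n. dg0 d \<epsilon> i + (if i = n - 1 then - r i else 0))"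
    by (simp add: mat_trace_def Tm_def Tent_def)
  also have "\<dots> = (\<Sum>i<n. dg0 d \<epsilon> i) + (\<Sum>i<n. (if i = n - 1 then - r i else 0))"
    by (rule sum.distrib)
  also have "(\<Sum>i<n. (if i = n - 1 then - r i else 0)) = - r (n - 1)"
    using n0 by (subst sum.delta) auto
  finally show ?thesis by simp
qed

lemma sum_dg0: "(\<Sum>i<2 * k. dg0 d \<epsilon> i) = (\<Sum>j<k. d j + \<epsilon>)"
proof (induct k)
  case 0 then show ?case by simp
next
  case (Suc k)
  have "(\<Sum>i<2 * Suc k. dg0 d \<epsilon> i) = (\<Sum>i<2 * k. dg0 d \<epsilon> i) + dg0 d \<epsilon> (2 * k) + dg0 d \<epsilon> (Suc (2 * k))"
    by simp
  also have "dg0 d \<epsilon> (2 * k) = d k" by (simp add: dg0_def)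
  also have "dg0 d \<epsilon> (Suc (2 * k)) = \<epsilon>" by (simp add: dg0_def)
  finally show ?case using Suc by simp
qed

lemma sum_single:
  fixes f :: "nat \<Rightarrow> 'a :: comm_monoid_add"
  assumes "\<And>j. j < n \<Longrightarrow> j \<noteq> a \<Longrightarrow> f j = 0"
  shows "(\<Sum>j<n. f j) = (if a < n then f a else 0)"
proof (cases "a < n")
  case True
  have "(\<Sum>j<n. f j) = f a + (\<Sum>j\<in>{..<n} - {a}. f j)"
    using True by (subst sum.remove[of _ a]) auto
  also have "(\<Sum>j\<in>{..<n} - {a}. f j) = 0" using assms by (intro sum.neutral) auto
  finally show ?thesis using True by simp
next
  case False
  then show ?thesis using assms by (intro trans[OF sum.neutral]) auto
qed

definition Dm :: "nat \<Rightarrow> (nat \<Rightarrow> 'a::field) \<Rightarrow> 'a \<Rightarrow> (nat \<Rightarrow> 'a) \<Rightarrow> 'a mat" where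
  "Dm n d \<epsilon> w = mat n n (\<lambda>(i,j). (if i = j then dg0 d \<epsilon> j else 0) + (if i = Suc j \<and> even j then 1 else 0)
      + (if j = n - 1 \<and> odd i then w i else 0))"

lemma Dm_carrier[simp]: "Dm n d \<epsilon> w \<in> carrier_mat n n" by (simp add: Dm_def)
lemma Dm_dims[simp]: "dim_row (Dm n d \<epsilon> w) = n" "dim_col (Dm n d \<epsilon> w) = n" by (simp_all add: Dm_def)

lemma Dm_mv: assumes x: "x \<in> carrier_vec n" and i: "i < n"
  shows "(Dm n d \<epsilon> w *\<^sub>v x) $ i = dg0 d \<epsilon> i * x $ i + (if odd i then x $ (i - 1) + w i * x $ (n - 1) else 0)"
proof -
  have "(Dm n d \<epsilon> w *\<^sub>v x) $ i = (\<Sum>j<n. (if i = j then dg0 d \<epsilon> j else 0) * x $ j)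
     + (\<Sum>j<n. (if i = Suc j \<and> even j then 1 else 0) * x $ j)
     + (\<Sum>j<n. (if j = n - 1 \<and> odd i then w i else 0) * x $ j)"
    using x i by (simp add: Dm_def scalar_prod_def atLeast0LessThan sum.distrib ring_distribs)
  also have "(\<Sum>j<n. (if i = j then dg0 d \<epsilon> j else 0) * x $ j) = dg0 d \<epsilon> i * x $ i"
    using i by (subst sum_single[of _ i]) auto
  also have "(\<Sum>j<n. (if i = Suc j \<and> even j then 1 else 0) * x $ j) = (if odd i then x $ (i - 1) else 0)"
  proof -
    have "(\<Sum>j<n. (if i = Suc j \<and> even j then 1 else 0) * x $ j) = (if i - 1 < n then (if i = Suc (i - 1) \<and> even (i - 1) then 1 else 0) * x $ (i - 1) else 0)"
      by (rule sum_single) auto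
    moreover have "(i = Suc (i - 1) \<and> even (i - 1)) = odd i" by presburger
    ultimately show ?thesis using i by auto
  qed
  also have "(\<Sum>j<n. (if j = n - 1 \<and> odd i then w i else 0) * x $ j) = (if odd i then w i * x $ (n - 1) else 0)"
    using i by (subst sum_single[of _ "n - 1"]) auto
  finally show ?thesis by simp
qed

lemma Dm_diag:
  fixes d :: "nat \<Rightarrow> 'a::field"
  assumes n: "n = 2 * k" "k > 0"
    and c1: "\<And>j. j < k \<Longrightarrow> d j \<noteq> \<epsilon>"
    and c2: "\<epsilon> + w (n - 1) \<noteq> \<epsilon>"
    and c3: "d (k - 1) \<noteq> \<epsilon> + w (n - 1)"
  shows "\<exists>U V. U \<in> carrier_mat n n \<and> V \<in> carrier_mat n n \<and> U * V = 1\<^sub>m n \<and> V * U = 1\<^sub>m n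
     \<and> diagonal_mat (V * Dm n d \<epsilon> w * U)"
proof -
  define K where "K = n - 1"
  define K' where "K' = n - 2"
  define lam where "lam = \<epsilon> + w (n - 1)"
  define dd where "dd = d (k - 1)"
  have K: "odd K" "K < n" "even K'" "Suc K' = K" "K' < n" "K = 2 * k - 1" "K' = 2 * (k - 1)"
    unfolding K_def K'_def using n by auto
  have dgK: "dg0 d \<epsilon> K = \<epsilon>" using K by (simp add: dg0_def)
  have dgK': "dg0 d \<epsilon> K' = dd" using K by (simp add: dg0_def dd_def)
  have dgev: "dg0 d \<epsilon> c \<noteq> \<epsilon>" if "even c" "c < n" for c
    using that c1[of "c div 2"] n by (auto simp: dg0_def)
  have dgod: "dg0 d \<epsilon> c = \<epsilon>" if "odd c" for c using that by (simp add: dg0_def)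
  have le: "lam \<noteq> \<epsilon>" using c2 unfolding lam_def .
  have ldd: "lam \<noteq> dd" using c3 unfolding lam_def dd_def by auto
  have edd: "\<epsilon> \<noteq> dd" using c1[of "k - 1"] n unfolding dd_def by auto
  define \<alpha> where "\<alpha> i = w i / (lam - \<epsilon>)" for i
  define \<beta> where "\<beta> c = 1 / (dg0 d \<epsilon> c - \<epsilon>)" for c
  define \<gamma> where "\<gamma> = - 1 / (lam - dd)"
  define \<delta> where "\<delta> i = w i / ((\<epsilon> - dd) * (lam - dd))" for i
  define ue where "ue i c = (if c = K then (if i = K then 1 else if odd i then \<alpha> i else 0)
          else if c = K' then (if i = K' then 1 else if i = K then \<gamma> else if odd i then \<delta> i else 0)
          else if even c then (if i = c then 1 else if i = Suc c then \<beta> c else 0)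
          else (if i = c then 1 else 0))" for i c
  define \<mu> where "\<mu> c = (if c = K then lam else dg0 d \<epsilon> c)" for c
  define U where "U = mat n n (\<lambda>(i, c). ue i c)"
  define L where "L = mat n n (\<lambda>(i, c). if i = c then \<mu> c else (0 :: 'a))"
  have U: "U \<in> carrier_mat n n" and L: "L \<in> carrier_mat n n" unfolding U_def L_def by auto
  have eig: "dg0 d \<epsilon> i * ue i c + (if odd i then ue (i - 1) c + w i * ue (n - 1) c else 0) = \<mu> c * ue i c"
    if i: "i < n" and c: "c < n" for i c
  proof -
    have KK: "n - 1 = K" "n - Suc 0 = K" unfolding K_def by simp_all
    show ?thesis
    proof (cases "c = K")
      case cK: True
      show ?thesis
      proof (cases "even i")
        case True then show ?thesis using cK K by (auto simp: ue_def \<mu>_def KK)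
      next
        case oi: False
        show ?thesis
        proof (cases "i = K")
          case True then show ?thesis using cK K dgK n by (auto simp: ue_def \<mu>_def KK lam_def K_def)
        next
          case False
          have ev: "even (i - 1)" using oi by presburger
          have "i - 1 \<noteq> K"
          proof
            assume "i - 1 = K"
            with ev K(1) show False by presburger
          qed
          then have "ue (i - 1) c = 0" using cK ev by (simp add: ue_def)
          moreover have "ue i c = \<alpha> i" "ue K c = 1" using cK oi False by (auto simp: ue_def)
          moreover have "\<epsilon> * \<alpha> i + w i = lam * \<alpha> i" unfolding \<alpha>_def using le by (simp add: field_simps)
          ultimately show ?thesis using oi cK dgod[OF oi] by (simp add: \<mu>_def KK)
        qed
      qed
    next
      case cnK: False
      show ?thesis
      proof (cases "c = K'")
        case cK': True
        have muc: "\<mu> c = dd" using cK' K dgK' by (auto simp: \<mu>_def)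
        show ?thesis
        proof (cases "even i")
          case True then show ?thesis using cK' K muc dgK' by (auto simp: ue_def)
        next
          case oi: False
          have uK: "ue K c = \<gamma>" using cK' K by (auto simp: ue_def)
          show ?thesis
          proof (cases "i = K")
            case True
            have "ue (i - 1) c = 1" using True cK' K by (auto simp: ue_def)
            moreover have "ue i c = \<gamma>" using True uK by simp
            moreover have "\<epsilon> * \<gamma> + (1 + w K * \<gamma>) = dd * \<gamma>"
            proof -
              have "\<epsilon> * \<gamma> + (1 + w K * \<gamma>) = lam * \<gamma> + 1" by (simp add: lam_def K_def algebra_simps)
              also have "\<dots> = dd * \<gamma>" unfolding \<gamma>_def using ldd
                by (simp add: field_simps)
              finally show ?thesis .
            qed
            ultimately show ?thesis using oi True dgK muc by (simp add: KK)
          next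
            case False
            have n2: "i - 1 \<noteq> K'" using False K oi by presburger
            have n1: "i - 1 \<noteq> K" using K(1) oi by presburger
            have "ue (i - 1) c = 0" using cK' K oi n1 n2 by (auto simp: ue_def)
            moreover have "ue i c = \<delta> i" using cK' K oi False by (auto simp: ue_def)
            moreover have "\<epsilon> * \<delta> i + w i * \<gamma> = dd * \<delta> i"
            proof -
              have e0: "\<epsilon> - dd \<noteq> 0" using edd by simp
              have h1: "(\<epsilon> - dd) * \<delta> i = w i / (lam - dd)" unfolding \<delta>_def
                by (simp only: times_divide_eq_right nonzero_mult_divide_mult_cancel_left[OF e0])
              have h2: "w i * \<gamma> = - (w i / (lam - dd))" unfolding \<gamma>_def by simp
              have "\<epsilon> * \<delta> i + w i * \<gamma> - dd * \<delta> i = (\<epsilon> - dd) * \<delta> i + w i * \<gamma>"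
                by (simp add: algebra_simps)
              also have "\<dots> = 0" unfolding h1 h2 by simp
              finally show ?thesis by simp
            qed
            ultimately show ?thesis using oi dgod[OF oi] muc uK by (simp add: KK)
          qed
        qed
      next
        case cnK': False
        show ?thesis
        proof (cases "even c")
          case ec: True
          have muc: "\<mu> c = dg0 d \<epsilon> c" using cnK by (simp add: \<mu>_def)
          have uK: "ue K c = 0" using cnK cnK' ec K by (auto simp: ue_def)
          have sc: "Suc c \<noteq> K" using cnK' K by auto
          show ?thesis
          proof (cases "even i")
            case True then show ?thesis using cnK cnK' ec muc by (auto simp: ue_def)
          next
            case oi: False
            show ?thesis
            proof (cases "i = Suc c")
              case True
              have "ue (i - 1) c = 1" "ue i c = \<beta> c" using True cnK cnK' ec by (auto simp: ue_def)
              moreover have "\<epsilon> * \<beta> c + 1 = dg0 d \<epsilon> c * \<beta> c" unfolding \<beta>_def using dgev[OF ec c]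
                by (simp add: field_simps)
              ultimately show ?thesis using oi dgod[OF oi] muc uK by (simp add: KK)
            next
              case False
              have "i - 1 \<noteq> c" using False oi by presburger
              moreover have "i - 1 \<noteq> Suc c" using oi ec by presburger
              ultimately have "ue (i - 1) c = 0" "ue i c = 0" using False cnK cnK' ec oi by (auto simp: ue_def)
              then show ?thesis using oi uK by (simp add: KK)
            qed
          qed
        next
          case oc: False
          have muc: "\<mu> c = \<epsilon>" using cnK oc dgod[OF oc] by (simp add: \<mu>_def)
          have uK: "ue K c = 0" using cnK cnK' oc K by (auto simp: ue_def)
          have "ue (i - 1) c = 0" if "odd i" using that oc cnK cnK' by (auto simp: ue_def) presburger?
          then show ?thesis using uK muc cnK cnK' oc dgod[OF oc] by (auto simp: ue_def KK)
        qed
      qed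
    qed
  qed
  have n0: "n > 0" using n by simp
  have colU: "col U c = vec n (\<lambda>i. ue i c)" if "c < n" for c
    using that by (intro eq_vecI) (auto simp: U_def)
  have DU: "Dm n d \<epsilon> w * U = U * L"
  proof (rule eq_matI)
    fix i c assume "i < dim_row (U * L)" "c < dim_col (U * L)"
    then have i: "i < n" and c: "c < n" using U L by auto
    have x: "col U c \<in> carrier_vec n" using U by (simp add: carrier_vecI)
    have "(Dm n d \<epsilon> w * U) $$ (i, c) = (Dm n d \<epsilon> w *\<^sub>v col U c) $ i" using i c U by simp
    also have "\<dots> = dg0 d \<epsilon> i * ue i c + (if odd i then ue (i - 1) c + w i * ue (n - 1) c else 0)"
      unfolding Dm_mv[OF x i] using i c n0 by (simp add: colU)
    also have "\<dots> = \<mu> c * ue i c" by (rule eig[OF i c])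
    also have "\<dots> = (U * L) $$ (i, c)"
    proof -
      have "(U * L) $$ (i, c) = (\<Sum>j<n. ue i j * (if j = c then \<mu> c else 0))"
        using i c by (simp add: U_def L_def scalar_prod_def atLeast0LessThan)
      also have "\<dots> = ue i c * \<mu> c" using c by (subst sum_single[of _ c]) auto
      finally show ?thesis by simp
    qed
    finally show "(Dm n d \<epsilon> w * U) $$ (i, c) = (U * L) $$ (i, c)" .
  qed (use U L in auto)
  have ue_even: "ue i c = (if c = i then 1 else 0)" if "even i" for i c
    using that K unfolding ue_def by auto
  have ue_K: "ue K c = (if c = K then 1 else if c = K' then \<gamma> else 0)" for c
    using K unfolding ue_def by auto
  have ue_odd: "ue i c = (if c = i then 1 else 0)" if "odd i" "i \<noteq> K" "odd c" "c \<noteq> K" for i c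
    using that K unfolding ue_def by auto
  have Umv: "(U *\<^sub>v x) $ i = (\<Sum>c<n. ue i c * x $ c)" if "i < n" "x \<in> carrier_vec n" for i x
    using that by (simp add: U_def scalar_prod_def atLeast0LessThan)
  have inj: "x = 0\<^sub>v n" if x: "x \<in> carrier_vec n" and z: "U *\<^sub>v x = 0\<^sub>v n" for x
  proof -
    have zi: "(\<Sum>c<n. ue i c * x $ c) = 0" if "i < n" for i using z that Umv[OF that x] by simp
    have ev: "x $ i = 0" if "i < n" "even i" for i
    proof -
      have "(\<Sum>c<n. ue i c * x $ c) = x $ i" using that by (subst sum_single[of _ i]) (auto simp: ue_even)
      then show ?thesis using zi[OF that(1)] by simp
    qed
    have xK: "x $ K = 0"
    proof -
      have "(\<Sum>c<n. ue K c * x $ c) = x $ K"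
      proof (subst sum_single[of _ K])
        fix c assume c: "c < n" "c \<noteq> K"
        show "ue K c * x $ c = 0"
        proof (cases "c = K'")
          case True then show ?thesis using ev[OF K(5) K(3)] by simp
        next
          case False then show ?thesis using c ue_K[of c] by simp
        qed
      qed (use K(2) ue_K[of K] in simp)
      then show ?thesis using zi[OF K(2)] by simp
    qed
    have od: "x $ i = 0" if "i < n" "odd i" "i \<noteq> K" for i
    proof -
      have "(\<Sum>c<n. ue i c * x $ c) = x $ i"
      proof (subst sum_single[of _ i])
        fix c assume c: "c < n" "c \<noteq> i"
        show "ue i c * x $ c = 0"
        proof (cases "even c")
          case True then show ?thesis using ev c by simp
        next
          case False
          show ?thesis
          proof (cases "c = K")
            case True then show ?thesis using xK by simp
          next
            case False
            then show ?thesis using ue_odd[OF that(2,3) _ False] \<open>\<not> even c\<close> c by simp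
          qed
        qed
      qed (use that ue_odd[OF that(2,3) that(2,3)] in simp)
      then show ?thesis using zi[OF that(1)] by simp
    qed
    show ?thesis
    proof (rule eq_vecI)
      fix i assume "i < dim_vec (0\<^sub>v n :: 'a vec)"
      then have i: "i < n" by simp
      show "x $ i = 0\<^sub>v n $ i"
        using ev[OF i] od[OF i] xK i by (cases "even i"; cases "i = K") auto
    qed (use x in simp)
  qed
  obtain V where V: "V \<in> carrier_mat n n" and UV: "U * V = 1\<^sub>m n" and VU: "V * U = 1\<^sub>m n"
    using inv_from_inj[OF U inj] by auto
  have "V * Dm n d \<epsilon> w * U = V * (Dm n d \<epsilon> w * U)" using V U by (simp add: assoc_mult_mat[of _ n n _ n _ n])
  also have "\<dots> = V * (U * L)" by (simp add: DU)
  also have "\<dots> = (V * U) * L" using V U L by (simp add: assoc_mult_mat[of _ n n _ n _ n])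
  also have "\<dots> = L" using VU L by simp
  finally have "V * Dm n d \<epsilon> w * U = L" .
  moreover have "diagonal_mat L" unfolding diagonal_mat_def L_def by auto
  ultimately show ?thesis using U V UV VU by auto
qed

definition Nm :: "nat \<Rightarrow> (nat \<Rightarrow> 'a::field) \<Rightarrow> 'a mat" where
  "Nm n r = mat n n (\<lambda>(i,j). (if j = n - 1 \<and> even i then r i else 0) + (if odd j \<and> i = Suc j then -1 else 0))"

lemma Nm_carrier[simp]: "Nm n r \<in> carrier_mat n n" by (simp add: Nm_def)
lemma Nm_dims[simp]: "dim_row (Nm n r) = n" "dim_col (Nm n r) = n" by (simp_all add: Nm_def)

lemma TN: "Tm n d \<epsilon> r + Nm n r = Dm n d \<epsilon> (\<lambda>i. - r i)"
  by (rule eq_matI) (auto simp: Tm_def Nm_def Dm_def Tent_def)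

lemma NN: assumes n: "even n" "n > 0"
  shows "Nm n r * Nm n r = 0\<^sub>m n n"
proof (rule eq_matI)
  fix i l assume "i < dim_row (0\<^sub>m n n :: 'a mat)" "l < dim_col (0\<^sub>m n n :: 'a mat)"
  then have i: "i < n" and l: "l < n" by auto
  have "(Nm n r * Nm n r) $$ (i, l) = (\<Sum>m<n. Nm n r $$ (i, m) * Nm n r $$ (m, l))"
    using i l by (simp add: scalar_prod_def atLeast0LessThan)
  also have "\<dots> = 0"
  proof (rule sum.neutral, intro ballI)
    fix m assume m: "m \<in> {..<n}"
    show "Nm n r $$ (i, m) * Nm n r $$ (m, l) = 0"
    proof (cases "even m")
      case True
      have "odd (n - 1)" using n by simp
      then have "m \<noteq> n - 1" using True by auto
      then have "Nm n r $$ (i, m) = 0" using True i m by (simp add: Nm_def)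
      then show ?thesis by simp
    next
      case False
      have "m \<noteq> Suc l \<or> even l" using False by auto
      then have "Nm n r $$ (m, l) = 0" using False l m by (auto simp: Nm_def)
      then show ?thesis by simp
    qed
  qed
  finally show "(Nm n r * Nm n r) $$ (i, l) = 0\<^sub>m n n $$ (i, l)" using i l by simp
qed auto

lemma three_field: assumes "card (UNIV :: 'a :: field set) = 3"
  shows "(1 :: 'a) \<noteq> - 1"
proof
  assume h: "(1 :: 'a) = - 1"
  have fin: "finite (UNIV :: 'a set)" using assms card.infinite by fastforce
  obtain a :: 'a where a: "a \<noteq> 0" "a \<noteq> 1"
  proof -
    have "\<not> UNIV \<subseteq> {0, 1::'a}"
    proof
      assume "UNIV \<subseteq> {0, 1::'a}"
      then have "card (UNIV :: 'a set) \<le> card {0, 1::'a}" by (intro card_mono) auto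
      also have "\<dots> \<le> 2" by (rule card_insert_le_m1) auto
      finally show False using assms by simp
    qed
    then show ?thesis using that by auto
  qed
  have c3: "card {0, 1, a} = 3" using a by simp
  have U: "UNIV = {0, 1, a}"
    using c3 assms fin by (metis card_subset_eq subset_UNIV)
  have "a + 1 \<in> {0, 1, a}" using U by blast
  moreover have "a + 1 \<noteq> 0" using h a by (metis add_eq_0_iff equation_minus_iff)
  moreover have "a + 1 \<noteq> 1" using a by simp
  moreover have "a + 1 \<noteq> a" by simp
  ultimately show False by blast
qed

lemma assoc_n: "A \<in> carrier_mat n n \<Longrightarrow> B \<in> carrier_mat n n \<Longrightarrow> C \<in> carrier_mat n n \<Longrightarrow> A * B * C = A * (B * C)"
  for A B C :: "'a :: comm_ring_1 mat"
  by (rule assoc_mult_mat)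

lemma mult_n[simp]: "A \<in> carrier_mat n n \<Longrightarrow> B \<in> carrier_mat n n \<Longrightarrow> A * B \<in> carrier_mat n n"
  for A B :: "'a :: comm_ring_1 mat"
  by (rule mult_carrier_mat)

lemma cancel_n: "Q * P = 1\<^sub>m n \<Longrightarrow> Q \<in> carrier_mat n n \<Longrightarrow> P \<in> carrier_mat n n \<Longrightarrow> X \<in> carrier_mat n n \<Longrightarrow> Q * (P * X) = X"
  for Q P X :: "'a :: comm_ring_1 mat"
  by (simp add: assoc_n[symmetric])

theorem proposition3p1:
  fixes A :: "'a :: field mat" and n :: nat
  assumes "card (UNIV :: 'a set) = 3"
    and "n > 0" and "even n"
    and "A \<in> carrier_mat n n"
    and "non_derogatory n A"
    and "mat_trace A = 0"
  shows "\<exists>M \<in> carrier_mat n n. M * M = 0\<^sub>m n n \<and> diagonalizable n (A + M)"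
proof -
  note card3 = assms(1) and n0 = assms(2) and ev = assms(3) and A = assms(4) and nd = assms(5) and tr = assms(6)
  define p where "p = char_poly A"
  have mp: "monic p" "poly_mat_eval n p A = 0\<^sub>m n n"
    "\<forall>q. q \<noteq> 0 \<and> poly_mat_eval n q A = 0\<^sub>m n n \<longrightarrow> degree p \<le> degree q"
    using nd unfolding non_derogatory_def is_minimal_poly_def p_def by auto
  have dp: "degree p = n" using degree_monic_char_poly[OF A] p_def by simp
  have p0: "p \<noteq> 0" using mp(1) by auto
  have minp: "n \<le> degree q" if "q \<noteq> 0" "poly_mat_eval n q A = 0\<^sub>m n n" for q
    using mp(3) that dp by auto
  obtain v where v: "v \<in> carrier_vec n"
    and cyc: "\<forall>q. q \<noteq> 0 \<longrightarrow> degree q < n \<longrightarrow> poly_mat_eval n q A *\<^sub>v v \<noteq> 0\<^sub>v n"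
    using cyclic_exists[OF A p0 mp(2) minp] by auto
  define k where "k = n div 2"
  have nk: "n = 2 * k" "k > 0" using ev n0 unfolding k_def by auto
  define \<epsilon> :: 'a where "\<epsilon> = (if k = 1 then 0 else 1)"
  define d :: "nat \<Rightarrow> 'a" where "d j = (if k = 1 then 1 else if j = 0 then 0 else -1)" for j
  have hdeg: "p - Hp d \<epsilon> k = 0 \<or> degree (p - Hp d \<epsilon> k) < n"
  proof -
    have h: "degree (Hp d \<epsilon> k) = n" "lead_coeff (Hp d \<epsilon> k) = 1" using Hp_monic[of d \<epsilon> k] nk by auto
    have h2: "coeff (Hp d \<epsilon> k) n = 1" using h by simp
    have h3: "coeff p n = 1" using mp(1) dp by simp
    have "degree (p - Hp d \<epsilon> k) \<le> n" using dp h by (intro degree_diff_le) auto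
    moreover have "coeff (p - Hp d \<epsilon> k) n = 0" using h2 h3 by simp
    ultimately show ?thesis
    proof (cases "p - Hp d \<epsilon> k = 0")
      case False
      assume "degree (p - Hp d \<epsilon> k) \<le> n" "coeff (p - Hp d \<epsilon> k) n = 0"
      then have "degree (p - Hp d \<epsilon> k) \<noteq> n" using False leading_coeff_0_iff by metis
      then show ?thesis using \<open>degree (p - Hp d \<epsilon> k) \<le> n\<close> by simp
    qed simp
  qed
  obtain r where hexp: "p - Hp d \<epsilon> k = (\<Sum>i<n. Polynomial.smult (r i) (bp d \<epsilon> i))"
    using bp_expand[OF hdeg] by blast
  define P where "P = Pm n A v d \<epsilon>"
  define T where "T = Tm n d \<epsilon> r"
  define N where "N = Nm n r"
  define D where "D = Dm n d \<epsilon> (\<lambda>i. - r i)"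
  have P: "P \<in> carrier_mat n n" and T: "T \<in> carrier_mat n n" and N: "N \<in> carrier_mat n n"
    and D: "D \<in> carrier_mat n n" unfolding P_def T_def N_def D_def by auto
  have AP: "A * P = P * T" unfolding P_def T_def by (rule AP_PT[OF A v nk mp(2) hexp])
  obtain Q where Q: "Q \<in> carrier_mat n n" and PQ: "P * Q = 1\<^sub>m n" and QP: "Q * P = 1\<^sub>m n"
    using inv_from_inj[OF P] Pm_inj[OF A v n0 cyc] unfolding P_def by blast
  have AeqPTQ: "A = P * T * Q"
  proof -
    have "A = A * (P * Q)" using A PQ by simp
    also have "\<dots> = (A * P) * Q" using A P Q by (simp add: assoc_n)
    also have "\<dots> = P * T * Q" using AP by simp
    finally show ?thesis .
  qed
  have trT: "mat_trace T = 0"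
  proof -
    have "mat_trace T = mat_trace ((Q * P) * T)" using QP T by simp
    also have "\<dots> = mat_trace (Q * (P * T))" using Q P T by (simp add: assoc_n)
    also have "\<dots> = mat_trace ((P * T) * Q)" using Q P T by (intro mat_trace_mult_comm) auto
    also have "\<dots> = mat_trace A" using AeqPTQ by simp
    finally show ?thesis using tr by simp
  qed
  have sumd: "(\<Sum>j<k. d j + \<epsilon>) = 1"
  proof (cases "k = 1")
    case True then show ?thesis by (simp add: d_def \<epsilon>_def)
  next
    case False
    have "(\<Sum>j<k. d j + \<epsilon>) = (\<Sum>j<k. if j = 0 then 1 else 0)"
      using False by (intro sum.cong) (auto simp: d_def \<epsilon>_def)
    also have "\<dots> = 1" using nk by (subst sum_single[of _ 0]) auto
    finally show ?thesis .
  qed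
  have r1: "r (n - 1) = 1"
    using trT trace_Tm[OF n0, of d \<epsilon> r] sum_dg0[of d \<epsilon> k] sumd nk unfolding T_def by simp
  have ne: "(1::'a) \<noteq> - 1" using three_field[OF card3] .
  have c1: "d j \<noteq> \<epsilon>" if "j < k" for j
    using ne by (auto simp: d_def \<epsilon>_def)
  have c2: "\<epsilon> + - r (n - 1) \<noteq> \<epsilon>" using r1 by simp
  have c3: "d (k - 1) \<noteq> \<epsilon> + - r (n - 1)"
    using r1 ne nk by (auto simp: d_def \<epsilon>_def)
  obtain U V where U: "U \<in> carrier_mat n n" and V: "V \<in> carrier_mat n n" and UV: "U * V = 1\<^sub>m n"
    and VU: "V * U = 1\<^sub>m n" and diag: "diagonal_mat (V * D * U)"
    using Dm_diag[OF nk, of d \<epsilon> "\<lambda>i. - r i", OF c1 c2 c3] unfolding D_def by blast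
  have TND: "T + N = D" unfolding T_def N_def D_def by (rule TN)
  have NN': "N * N = 0\<^sub>m n n" unfolding N_def using NN[OF ev n0] .
  define M where "M = P * N * Q"
  have M: "M \<in> carrier_mat n n" unfolding M_def using P N Q by simp
  have MM: "M * M = 0\<^sub>m n n"
  proof -
    have "M * M = P * (N * (Q * (P * (N * Q))))" unfolding M_def using P N Q by (simp add: assoc_n)
    also have "\<dots> = P * (N * (N * Q))" using QP Q P N by (simp add: cancel_n)
    also have "\<dots> = P * ((N * N) * Q)" using N Q by (simp add: assoc_n)
    also have "\<dots> = 0\<^sub>m n n" unfolding NN' using P Q by simp
    finally show ?thesis .
  qed
  have AM: "A + M = P * D * Q"
  proof -
    have "A + M = P * T * Q + P * N * Q" unfolding M_def using AeqPTQ by simp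
    also have "\<dots> = (P * T + P * N) * Q" using P T N Q by (simp add: add_mult_distrib_mat[where nr=n and n=n and nc=n])
    also have "\<dots> = P * (T + N) * Q" using P T N by (simp add: mult_add_distrib_mat[where nr=n and n=n and nc=n])
    also have "\<dots> = P * D * Q" using TND by simp
    finally show ?thesis .
  qed
  have dg: "diagonalizable n (A + M)"
    unfolding diagonalizable_def
  proof (intro exI conjI)
    show "P * U \<in> carrier_mat n n" "V * Q \<in> carrier_mat n n" using P U V Q by auto
    show "P * U * (V * Q) = 1\<^sub>m n"
    proof -
      have "P * U * (V * Q) = P * ((U * V) * Q)" using P U V Q by (simp add: assoc_n)
      also have "\<dots> = 1\<^sub>m n" using UV PQ Q by simp
      finally show ?thesis .
    qed
    show "V * Q * (P * U) = 1\<^sub>m n"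
    proof -
      have "V * Q * (P * U) = V * ((Q * P) * U)" using P U V Q by (simp add: assoc_n)
      also have "\<dots> = 1\<^sub>m n" using VU QP U by simp
      finally show ?thesis .
    qed
    show "diagonal_mat (V * Q * (A + M) * (P * U))"
    proof -
      have "V * Q * (A + M) * (P * U) = V * (Q * (P * (D * (Q * (P * U)))))"
        unfolding AM using P U V Q D by (simp add: assoc_n)
      also have "\<dots> = V * (D * U)" using QP Q P D U by (simp add: cancel_n)
      also have "\<dots> = V * D * U" using V D U by (simp add: assoc_n)
      finally show ?thesis using diag by simp
    qed
  qed
  show ?thesis using M MM dg by blast
qed

end
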